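(* Let $G=(V,E,\gamma,c)$ be a typed DAG task with $M_s\ge1$ cores of each type $s\in S$, and let $\pi=(\tau_1,\dots,\tau_k)$ be a complete path of $G$. Define $\delta(\tau_i,s)$, $\varphi(\tau_i)$ and $\mathcal{R}(\tau_i)$ as in the context. Then \[ \mathcal{R}(\tau_k)=len(\pi)+\sum_{s\in S}\sum_{v\in\mathrm{ivs}(\pi,s)}\frac{c(v)}{M_s}. \]
   Context: A typed DAG task is $G=(V,E,\gamma,c)$ where $(V,E)$ is a finite directed acyclic graph with a unique source $v_{src}$ and a unique sink $v_{snk}$, $S$ is a finite set of core types, $\gamma:V\to S$ gives the type of each vertex, and $c:V\to\mathbb{R}_{\ge0}$ gives the WCET of each vertex. A complete path is a path from $v_{src}$ to $v_{snk}$; $len(\pi)=\sum_{u\in\pi}c(u)$. $\mathrm{ans}(u)$, $\mathrm{des}(u)$ denote ancestors and descendants of $u$. For $v\in V$, $\mathrm{par}(v)=\{u\in V: u\ne v,\ \gamma(u)=\gamma(v),\ u\notin \mathrm{ans}(v)\cup\mathrm{des}(v)\}$, and $\mathrm{par}(\bot)=\emptyset$. For a path $\pi=(\tau_1,\dots,\tau_k)$ and $s\in S$, $\mathrm{ivs}(\pi,s)=\bigcup_{i:\gamma(\tau_i)=s}\mathrm{par}(\tau_i)$. For $s\in S$: $\delta(\tau_i,s)=\tau_i$ if $\gamma(\tau_i)=s$; $\delta(\tau_1,s)=\bot$ if $\gamma(\tau_1)\ne s$; $\delta(\tau_i,s)=\delta(\tau_{i-1},s)$ if $\gamma(\tau_i)\ne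 s$ and $2\le i\le k$ (so $\delta(\tau_i,s)$ is the last vertex of type $s$ among $\tau_1,\dots,\tau_i$, or $\bot$ if none). For $2\le i\le k$, $\varphi(\tau_i)=\mathrm{par}(\tau_i)\setminus\mathrm{par}(\delta(\tau_{i-1},\gamma(\tau_i)))$. Finally $\mathcal{R}(\tau_1)=c(\tau_1)$ and, for $2\le i\le k$, $\mathcal{R}(\tau_i)=\mathcal{R}(\tau_{i-1})+c(\tau_i)+\sum_{v\in\varphi(\tau_i)}c(v)/M_{\gamma(\tau_i)}$. *)

theory Defs
  imports Complex_Main
begin

definition typed_dag_task ::
  "'v set \<Rightarrow> ('v \<times> 'v) set \<Rightarrow> 's set \<Rightarrow> ('v \<Rightarrow> 's) \<Rightarrow> ('v \<Rightarrow> real) \<Rightarrow> 'v \<Rightarrow> 'v \<Rightarrow> bool" where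
  "typed_dag_task V E S \<gamma> c src snk \<longleftrightarrow>
     finite V \<and> finite S \<and> E \<subseteq> V \<times> V \<and> acyclic E \<and>
     (\<forall>v\<in>V. \<gamma> v \<in> S) \<and> (\<forall>v\<in>V. c v \<ge> 0) \<and>
     src \<in> V \<and> snk \<in> V \<and>
     (\<forall>v\<in>V. (\<nexists>u. (u, v) \<in> E) \<longleftrightarrow> v = src) \<and>
     (\<forall>v\<in>V. (\<nexists>w. (v, w) \<in> E) \<longleftrightarrow> v = snk)"

definition complete_path :: "('v \<times> 'v) set \<Rightarrow> 'v \<Rightarrow> 'v \<Rightarrow> 'v list \<Rightarrow> bool" where
  "complete_path E src snk \<pi> \<longleftrightarrow>
     \<pi> \<noteq> [] \<and> hd \<pi> = src \<and> last \<pi> = snk \<and>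
     (\<forall>i. Suc i < length \<pi> \<longrightarrow> (\<pi> ! i, \<pi> ! Suc i) \<in> E)"

definition path_len :: "('v \<Rightarrow> real) \<Rightarrow> 'v list \<Rightarrow> real" where
  "path_len c \<pi> = sum_list (map c \<pi>)"

text \<open>ans(v) = {u. (u,v) \<in> E^+}, des(v) = {u. (v,u) \<in> E^+}.\<close>
definition par :: "'v set \<Rightarrow> ('v \<times> 'v) set \<Rightarrow> ('v \<Rightarrow> 's) \<Rightarrow> 'v \<Rightarrow> 'v set" where
  "par V E \<gamma> v = {u \<in> V. u \<noteq> v \<and> \<gamma> u = \<gamma> v \<and> (u, v) \<notin> E\<^sup>+ \<and> (v, u) \<notin> E\<^sup>+}"

fun par_opt :: "'v set \<Rightarrow> ('v \<times> 'v) set \<Rightarrow> ('v \<Rightarrow> 's) \<Rightarrow> 'v option \<Rightarrow> 'v set" where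
  "par_opt V E \<gamma> None = {}"
| "par_opt V E \<gamma> (Some v) = par V E \<gamma> v"

definition ivs :: "'v set \<Rightarrow> ('v \<times> 'v) set \<Rightarrow> ('v \<Rightarrow> 's) \<Rightarrow> 'v list \<Rightarrow> 's \<Rightarrow> 'v set" where
  "ivs V E \<gamma> \<pi> s = (\<Union>i \<in> {i. i < length \<pi> \<and> \<gamma> (\<pi> ! i) = s}. par V E \<gamma> (\<pi> ! i))"

text \<open>Indices are 0-based: index i corresponds to tau_(i+1) of the paper.
  delta \<pi> i s = last vertex of type s among \<pi>!0..\<pi>!i, None for bottom.\<close>
fun delta :: "('v \<Rightarrow> 's) \<Rightarrow> 'v list \<Rightarrow> nat \<Rightarrow> 's \<Rightarrow> 'v option" where
  "delta \<gamma> \<pi> 0 s = (if \<gamma> (\<pi> ! 0) = s then Some (\<pi> ! 0) else None)"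
| "delta \<gamma> \<pi> (Suc i) s = (if \<gamma> (\<pi> ! Suc i) = s then Some (\<pi> ! Suc i) else delta \<gamma> \<pi> i s)"

text \<open>phi for 0-based index Suc i (paper's tau_(i+2), i.e. indices 2..k).\<close>
definition phi :: "'v set \<Rightarrow> ('v \<times> 'v) set \<Rightarrow> ('v \<Rightarrow> 's) \<Rightarrow> 'v list \<Rightarrow> nat \<Rightarrow> 'v set" where
  "phi V E \<gamma> \<pi> i = par V E \<gamma> (\<pi> ! i) - par_opt V E \<gamma> (delta \<gamma> \<pi> (i - 1) (\<gamma> (\<pi> ! i)))"

fun R :: "'v set \<Rightarrow> ('v \<times> 'v) set \<Rightarrow> ('v \<Rightarrow> 's) \<Rightarrow> ('v \<Rightarrow> real) \<Rightarrow> ('s \<Rightarrow> nat) \<Rightarrow> 'v list \<Rightarrow> nat \<Rightarrow> real" where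
  "R V E \<gamma> c M \<pi> 0 = c (\<pi> ! 0)"
| "R V E \<gamma> c M \<pi> (Suc i) = R V E \<gamma> c M \<pi> i + c (\<pi> ! Suc i)
      + (\<Sum>v \<in> phi V E \<gamma> \<pi> (Suc i). c v / real (M (\<gamma> (\<pi> ! Suc i))))"

end

theory Submission
  imports Defs
begin

lemma delta_spec:
  "(delta \<gamma> \<pi> n s = None \<longrightarrow> (\<forall>i\<le>n. \<gamma> (\<pi>!i) \<noteq> s)) \<and>
   (\<forall>v. delta \<gamma> \<pi> n s = Some v \<longrightarrow> (\<exists>j\<le>n. v = \<pi>!j \<and> \<gamma> (\<pi>!j) = s \<and> (\<forall>i. j < i \<and> i \<le> n \<longrightarrow> \<gamma> (\<pi>!i) \<noteq> s)))"
proof (induction n)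
  case 0 then show ?case by auto
next
  case (Suc n)
  show ?case
  proof (cases "\<gamma> (\<pi> ! Suc n) = s")
    case True then show ?thesis by auto
  next
    case False
    then show ?thesis using Suc
      by (auto simp: le_Suc_eq) (metis le_SucI le_Suc_eq)
  qed
qed

lemma path_trancl:
  assumes "complete_path E src snk \<pi>" "i < j" "j < length \<pi>"
  shows "(\<pi>!i, \<pi>!j) \<in> E\<^sup>+"
  using assms(2,3)
proof (induction j)
  case 0 then show ?case by simp
next
  case (Suc j)
  have e: "(\<pi>!j, \<pi>!Suc j) \<in> E" using assms(1) Suc.prems unfolding complete_path_def by auto
  show ?case
  proof (cases "i = j")
    case True then show ?thesis using e by auto
  next
    case False
    then have "(\<pi>!i, \<pi>!j) \<in> E\<^sup>+" using Suc by auto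
    then show ?thesis using e by auto
  qed
qed

lemma src_reach:
  assumes "typed_dag_task V E S \<gamma> c src snk"
  shows "\<forall>v\<in>V. v = src \<or> (src, v) \<in> E\<^sup>+"
proof -
  have fin: "finite E" using assms unfolding typed_dag_task_def
    by (meson finite_SigmaI finite_subset)
  have "wf E" using assms fin finite_acyclic_wf unfolding typed_dag_task_def by blast
  have "v \<in> V \<longrightarrow> v = src \<or> (src, v) \<in> E\<^sup>+" for v
    using \<open>wf E\<close>
  proof (induction v rule: wf_induct_rule)
    case (less v)
    show ?case
    proof
      assume v: "v \<in> V"
      show "v = src \<or> (src, v) \<in> E\<^sup>+"
      proof (cases "v = src")
        case False
        then obtain u where u: "(u, v) \<in> E" using assms v unfolding typed_dag_task_def by blast
        then have "u \<in> V" using assms unfolding typed_dag_task_def by blast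
        then have "u = src \<or> (src, u) \<in> E\<^sup>+" using less u by blast
        then show ?thesis using u by (meson trancl.trancl_into_trancl r_into_trancl)
      qed simp
    qed
  qed
  then show ?thesis by blast
qed

lemma par_src:
  assumes "typed_dag_task V E S \<gamma> c src snk"
  shows "par V E \<gamma> src = {}"
  using src_reach[OF assms] unfolding par_def by auto

theorem lemma3:
  fixes V :: "'v set" and E :: "('v \<times> 'v) set" and S :: "'s set"
    and \<gamma> :: "'v \<Rightarrow> 's" and c :: "'v \<Rightarrow> real" and M :: "'s \<Rightarrow> nat"
    and src snk :: 'v and \<pi> :: "'v list"
  assumes "typed_dag_task V E S \<gamma> c src snk"
    and "\<forall>s\<in>S. M s \<ge> 1"
    and "complete_path E src snk \<pi>"
  shows "R V E \<gamma> c M \<pi> (length \<pi> - 1)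
           = path_len c \<pi> + (\<Sum>s\<in>S. \<Sum>v\<in>ivs V E \<gamma> \<pi> s. c v / real (M s))"
proof -
  note T = assms(1) and P = assms(3)
  define I where "I n s = (\<Union>i \<in> {i. i \<le> n \<and> \<gamma> (\<pi>!i) = s}. par V E \<gamma> (\<pi>!i))" for n s
  have ne: "\<pi> \<noteq> []" and hd: "\<pi>!0 = src" using P unfolding complete_path_def by (auto simp: hd_conv_nth)
  have finV: "finite V" using T unfolding typed_dag_task_def by auto
  have finI: "finite (I n s)" for n s
    unfolding I_def par_def by (rule finite_subset[OF _ finV]) auto
  have inV: "\<pi>!i \<in> V" if "i < length \<pi>" for i
  proof (cases i)
    case 0 then show ?thesis using hd T unfolding typed_dag_task_def by auto
  next
    case (Suc j)
    then have "(\<pi>!j, \<pi>!i) \<in> E" using P that unfolding complete_path_def by auto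
    then show ?thesis using T unfolding typed_dag_task_def by auto
  qed
  have inS: "\<gamma> (\<pi>!i) \<in> S" if "i < length \<pi>" for i
    using inV[OF that] T unfolding typed_dag_task_def by auto
  have acyc: "acyclic E" using T unfolding typed_dag_task_def by auto
  have dist: "\<pi>!i \<noteq> \<pi>!j" if "i < j" "j < length \<pi>" for i j
    using path_trancl[OF P that] acyc unfolding acyclic_def by auto
  have three: "par V E \<gamma> (\<pi>!a) \<inter> par V E \<gamma> (\<pi>!k) \<subseteq> par V E \<gamma> (\<pi>!b)"
    if "a < b" "b < k" "k < length \<pi>" "\<gamma> (\<pi>!a) = \<gamma> (\<pi>!b)" for a b k
  proof
    fix x assume x: "x \<in> par V E \<gamma> (\<pi>!a) \<inter> par V E \<gamma> (\<pi>!k)"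
    have ab: "(\<pi>!a, \<pi>!b) \<in> E\<^sup>+" using path_trancl[OF P, of a b] that by auto
    have bk: "(\<pi>!b, \<pi>!k) \<in> E\<^sup>+" using path_trancl[OF P, of b k] that by auto
    have "x \<noteq> \<pi>!b" using x bk unfolding par_def by auto
    moreover have "(x, \<pi>!b) \<notin> E\<^sup>+" proof
    assume "(x, \<pi>!b) \<in> E\<^sup>+"
    then have "(x, \<pi>!k) \<in> E\<^sup>+" using bk by (rule trancl_trans)
    then show False using x unfolding par_def by auto
  qed
    moreover have "(\<pi>!b, x) \<notin> E\<^sup>+" proof
    assume "(\<pi>!b, x) \<in> E\<^sup>+"
    then have "(\<pi>!a, x) \<in> E\<^sup>+" using ab by (meson trancl_trans)
    then show False using x unfolding par_def by auto
  qed
    ultimately show "x \<in> par V E \<gamma> (\<pi>!b)" using x that unfolding par_def by auto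
  qed
  have key: "phi V E \<gamma> \<pi> (Suc n) = par V E \<gamma> (\<pi>!Suc n) - I n (\<gamma> (\<pi>!Suc n))"
    if "Suc n < length \<pi>" for n
  proof -
    define t where "t = \<gamma> (\<pi>!Suc n)"
    show ?thesis
    proof (cases "delta \<gamma> \<pi> n t")
      case None
      then have "I n t = {}" using delta_spec[of \<gamma> \<pi> n t] unfolding I_def by auto
      then show ?thesis using None unfolding phi_def t_def by simp
    next
      case (Some v)
      then obtain j where j: "j \<le> n" "v = \<pi>!j" "\<gamma> (\<pi>!j) = t"
        and nj: "\<forall>i. j < i \<and> i \<le> n \<longrightarrow> \<gamma> (\<pi>!i) \<noteq> t"
        using delta_spec[of \<gamma> \<pi> n t] by blast
      have sub1: "par V E \<gamma> (\<pi>!j) \<subseteq> I n t" using j unfolding I_def by auto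
      have sub2: "par V E \<gamma> (\<pi>!Suc n) \<inter> I n t \<subseteq> par V E \<gamma> (\<pi>!j)"
      proof
        fix x assume x: "x \<in> par V E \<gamma> (\<pi>!Suc n) \<inter> I n t"
        then obtain i where i: "i \<le> n" "\<gamma> (\<pi>!i) = t" "x \<in> par V E \<gamma> (\<pi>!i)" unfolding I_def by auto
        have "i \<le> j" proof (rule ccontr) assume "\<not> i \<le> j" then show False using nj i(1,2) by auto qed
        show "x \<in> par V E \<gamma> (\<pi>!j)"
        proof (cases "i = j")
          case True then show ?thesis using i by simp
        next
          case False
          then have "i < j" using \<open>i \<le> j\<close> by simp
          then show ?thesis using three[of i j "Suc n"] x i j that by auto
        qed
      qed
      have "phi V E \<gamma> \<pi> (Suc n) = par V E \<gamma> (\<pi>!Suc n) - par V E \<gamma> (\<pi>!j)"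
        using Some j unfolding phi_def t_def by simp
      also have "\<dots> = par V E \<gamma> (\<pi>!Suc n) - I n t" using sub1 sub2 by blast
      finally show ?thesis unfolding t_def .
    qed
  qed
  let ?g = "\<lambda>s v. c v / real (M s)"
  have main: "R V E \<gamma> c M \<pi> n = sum_list (map c (take (Suc n) \<pi>)) + (\<Sum>s\<in>S. \<Sum>v\<in>I n s. ?g s v)"
    if "n < length \<pi>" for n
    using that
  proof (induction n)
    case 0
    have "I 0 s = {}" for s using par_src[OF T] hd unfolding I_def by auto
    then show ?case using ne by (cases \<pi>) auto
  next
    case (Suc n)
    define t where "t = \<gamma> (\<pi>!Suc n)"
    have step: "(\<Sum>v\<in>I (Suc n) s. ?g s v) = (\<Sum>v\<in>I n s. ?g s v)
         + (if s = t then (\<Sum>v\<in>phi V E \<gamma> \<pi> (Suc n). ?g t v) else 0)" for s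
    proof (cases "s = t")
      case True
      have "I (Suc n) s = I n s \<union> par V E \<gamma> (\<pi>!Suc n)"
        using True unfolding I_def t_def by (auto simp: le_Suc_eq)
      also have "\<dots> = I n s \<union> (par V E \<gamma> (\<pi>!Suc n) - I n s)" by blast
      finally have eq: "I (Suc n) s = I n s \<union> (par V E \<gamma> (\<pi>!Suc n) - I n s)" .
      have fp: "finite (par V E \<gamma> (\<pi>!Suc n) - I n s)"
        unfolding par_def by (rule finite_subset[OF _ finV]) auto
      have "(\<Sum>v\<in>I (Suc n) s. ?g s v) = (\<Sum>v\<in>I n s. ?g s v) + (\<Sum>v\<in>par V E \<gamma> (\<pi>!Suc n) - I n s. ?g s v)"
        unfolding eq by (rule sum.union_disjoint[OF finI fp]) blast
      then show ?thesis using True key[OF Suc.prems] unfolding t_def by simp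
    next
      case False
      have "I (Suc n) s = I n s"
        using False unfolding I_def t_def by (auto simp: le_Suc_eq)
      then show ?thesis using False by simp
    qed
    have tS: "t \<in> S" using inS[OF Suc.prems] unfolding t_def .
    have "(\<Sum>s\<in>S. \<Sum>v\<in>I (Suc n) s. ?g s v) = (\<Sum>s\<in>S. \<Sum>v\<in>I n s. ?g s v)
           + (\<Sum>v\<in>phi V E \<gamma> \<pi> (Suc n). ?g t v)"
      unfolding step sum.distrib using tS finV T
      by (simp add: sum.delta typed_dag_task_def)
    moreover have "take (Suc (Suc n)) \<pi> = take (Suc n) \<pi> @ [\<pi>!Suc n]"
      using Suc.prems by (simp add: take_Suc_conv_app_nth)
    ultimately show ?case using Suc unfolding t_def by simp
  qed
  have l: "length \<pi> - 1 < length \<pi>" using ne by simp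
  have "I (length \<pi> - 1) s = ivs V E \<gamma> \<pi> s" for s
    proof -
    have "{i. i \<le> length \<pi> - 1 \<and> \<gamma> (\<pi>!i) = s} = {i. i < length \<pi> \<and> \<gamma> (\<pi>!i) = s}"
      using ne by (cases \<pi>) auto
    then show ?thesis unfolding I_def ivs_def by simp
  qed
  then show ?thesis using main[OF l] ne unfolding path_len_def by simp
qed

end
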